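(* If $b > a \geq 2$, then $I_{a,b} \geq P_a(a+b-1) \cdot P_b(a+b-1)$.
   Context: $K_{a,b}$ is the complete bipartite graph with partite sets of sizes $a$ and $b$. $I_{a,b}$ denotes the number of isomorphism classes (as unlabeled graphs) of spanning trees of $K_{a,b}$. $P_k(m)$ denotes the number of integer partitions of $m$ into exactly $k$ positive parts. *)

theory Defs
  imports Main "HOL-Library.Multiset"
begin

definition kab_verts :: "nat \<Rightarrow> nat \<Rightarrow> (nat + nat) set" where
  "kab_verts a b = Inl ` {..<a} \<union> Inr ` {..<b}"

definition kab_edges :: "nat \<Rightarrow> nat \<Rightarrow> (nat + nat) set set" where
  "kab_edges a b = {{Inl i, Inr j} | i j. i < a \<and> j < b}"

definition graph_connected :: "'v set \<Rightarrow> 'v set set \<Rightarrow> bool" where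
  "graph_connected V E \<longleftrightarrow>
     (\<forall>u\<in>V. \<forall>v\<in>V. (u, v) \<in> {(x, y). {x, y} \<in> E}\<^sup>*)"

definition has_cycle :: "'v set set \<Rightarrow> bool" where
  "has_cycle E \<longleftrightarrow>
     (\<exists>vs. 3 \<le> length vs \<and> distinct vs \<and>
        (\<forall>i < length vs. {vs ! i, vs ! ((i + 1) mod length vs)} \<in> E))"

definition is_tree :: "'v set \<Rightarrow> 'v set set \<Rightarrow> bool" where
  "is_tree V E \<longleftrightarrow> graph_connected V E \<and> \<not> has_cycle E"

definition spanning_tree_kab :: "nat \<Rightarrow> nat \<Rightarrow> (nat + nat) set set \<Rightarrow> bool" where
  "spanning_tree_kab a b T \<longleftrightarrow> T \<subseteq> kab_edges a b \<and> is_tree (kab_verts a b) T"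

definition graph_iso :: "'v set \<Rightarrow> 'v set set \<Rightarrow> 'v set set \<Rightarrow> bool" where
  "graph_iso V E1 E2 \<longleftrightarrow>
     (\<exists>f. bij_betw f V V \<and> (\<forall>u\<in>V. \<forall>v\<in>V. {u, v} \<in> E1 \<longleftrightarrow> {f u, f v} \<in> E2))"

definition I_kab :: "nat \<Rightarrow> nat \<Rightarrow> nat" where
  "I_kab a b = card ((\<lambda>T. {T'. spanning_tree_kab a b T' \<and> graph_iso (kab_verts a b) T T'})
                      ` {T. spanning_tree_kab a b T})"

definition P_parts :: "nat \<Rightarrow> nat \<Rightarrow> nat" where
  "P_parts k m = card {p :: nat multiset. size p = k \<and> sum_mset p = m \<and> (\<forall>x\<in>#p. 0 < x)}"

end

theory Submission
  imports Defs
begin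

definition deg :: "'v set \<Rightarrow> 'v set set \<Rightarrow> 'v \<Rightarrow> nat" where
  "deg V T v = card {u\<in>V. {v, u} \<in> T}"

lemma single_tree: "is_tree {v} {}"
  unfolding is_tree_def graph_connected_def has_cycle_def
  by (auto; metis less_le_trans zero_less_numeral)

lemma leaf_connected:
  assumes "graph_connected V T" "x \<in> V" "y \<notin> V"
  shows "graph_connected (insert y V) (insert {x, y} T)"
proof -
  let ?r = "{(a, b). {a, b} \<in> T}"
  let ?r' = "{(a, b). {a, b} \<in> insert {x, y} T}"
  have sub: "?r\<^sup>* \<subseteq> ?r'\<^sup>*" by (rule rtrancl_mono) auto
  have xy: "(x, y) \<in> ?r'\<^sup>*" by (rule r_into_rtrancl) auto
  have yx: "(y, x) \<in> ?r'\<^sup>*" by (rule r_into_rtrancl) (auto simp: insert_commute)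
  have old: "\<And>u v. u \<in> V \<Longrightarrow> v \<in> V \<Longrightarrow> (u, v) \<in> ?r'\<^sup>*"
    using assms(1) sub unfolding graph_connected_def by blast
  show ?thesis unfolding graph_connected_def
  proof (intro ballI)
    fix u v assume u: "u \<in> insert y V" and v: "v \<in> insert y V"
    show "(u, v) \<in> ?r'\<^sup>*"
    proof (cases "u = y")
      case True
      show ?thesis
      proof (cases "v = y")
        case True with \<open>u = y\<close> show ?thesis by simp
      next
        case False
        then have "v \<in> V" using v by simp
        then show ?thesis using \<open>u = y\<close> yx old[OF assms(2)] by (meson rtrancl_trans)
      qed
    next
      case False
      then have uV: "u \<in> V" using u by simp
      show ?thesis
      proof (cases "v = y")
        case True then show ?thesis using xy old[OF uV assms(2)] by (meson rtrancl_trans)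
      next
        case False then show ?thesis using v uV old by simp
      qed
    qed
  qed
qed

lemma leaf_acyclic:
  assumes "\<not> has_cycle T" "\<forall>e\<in>T. e \<subseteq> V" "x \<in> V" "y \<notin> V"
  shows "\<not> has_cycle (insert {x, y} T)"
proof
  assume "has_cycle (insert {x, y} T)"
  then obtain vs where len: "3 \<le> length vs" and dist: "distinct vs"
    and E: "\<forall>i < length vs. {vs ! i, vs ! ((i + 1) mod length vs)} \<in> insert {x, y} T"
    unfolding has_cycle_def by blast
  let ?n = "length vs"
  show False
  proof (cases "y \<in> set vs")
    case False
    have "\<forall>i < ?n. {vs ! i, vs ! ((i + 1) mod ?n)} \<in> T"
    proof (intro allI impI)
      fix i assume i: "i < ?n"
      have "vs ! i \<in> set vs" "vs ! ((i + 1) mod ?n) \<in> set vs" using i len by (auto intro!: nth_mem mod_less_divisor)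
      then have "{vs ! i, vs ! ((i + 1) mod ?n)} \<noteq> {x, y}" using False by (metis insertCI doubleton_eq_iff)
      then show "{vs ! i, vs ! ((i + 1) mod ?n)} \<in> T" using E i by auto
    qed
    then show False using assms(1) len dist unfolding has_cycle_def by blast
  next
    case True
    then obtain k where k: "k < ?n" "vs ! k = y" by (metis in_set_conv_nth)
    have xy: "x \<noteq> y" using assms by auto
    have key: "\<And>z. {y, z} \<in> insert {x, y} T \<Longrightarrow> z = x"
    proof -
      fix z assume "{y, z} \<in> insert {x, y} T"
      moreover have "{y, z} \<notin> T" using assms(2,4) by auto
      ultimately have "{y, z} = {x, y}" by auto
      then show "z = x" using xy by (metis doubleton_eq_iff)
    qed
    define q where "q = (k + 1) mod ?n"
    define p where "p = (k + ?n - 1) mod ?n"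
    have pq: "(p + 1) mod ?n = k" using k len unfolding p_def
      by (metis (no_types, lifting) Nat.add_diff_assoc2 add_diff_cancel_right' le_add2
          le_trans mod_add_left_eq mod_add_self2 mod_less one_le_numeral)
    have q1: "vs ! q = x" using key E k unfolding q_def by force
    have pn: "p < ?n" using len unfolding p_def by (auto intro!: mod_less_divisor)
    have "{vs ! p, vs ! ((p + 1) mod ?n)} \<in> insert {x, y} T" using E pn by blast
    then have "{vs ! p, y} \<in> insert {x, y} T" using pq k by simp
    then have p1: "vs ! p = x" using key by (simp add: insert_commute)
    have "p < ?n" "q < ?n" using len unfolding p_def q_def by (auto intro!: mod_less_divisor)
    then have "p = q" using p1 q1 dist using nth_eq_iff_index_eq by blast
    have c1: "k + 1 < ?n \<Longrightarrow> q = k + 1" unfolding q_def by simp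
    have c2: "k + 1 = ?n \<Longrightarrow> q = 0" unfolding q_def by simp
    have c3: "1 \<le> k \<Longrightarrow> p = k - 1"
    proof -
      assume "1 \<le> k"
      then have "k + ?n - 1 = (k - 1) + ?n" by simp
      then have "p = (k - 1 + ?n) mod ?n" unfolding p_def by (rule arg_cong)
      also have "\<dots> = (k - 1) mod ?n" by (rule mod_add_self2)
      also have "\<dots> = k - 1" using k by (intro mod_less) linarith
      finally show "p = k - 1" .
    qed
    have c4: "k = 0 \<Longrightarrow> p = ?n - 1" unfolding p_def using len by simp
    show False using c1 c2 c3 c4 \<open>p = q\<close> k len by linarith
  qed
qed


lemma leaf_tree:
  assumes "is_tree V T" "\<forall>e\<in>T. e \<subseteq> V" "x \<in> V" "y \<notin> V"
  shows "is_tree (insert y V) (insert {x, y} T)"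
  using assms leaf_connected leaf_acyclic unfolding is_tree_def by metis

lemma deg_leaf_new:
  assumes "\<forall>e\<in>T. e \<subseteq> V" "x \<in> V" "y \<notin> V"
  shows "deg (insert y V) (insert {x, y} T) y = 1"
proof -
  have "{u\<in>insert y V. {y, u} \<in> insert {x, y} T} = {x}"
  proof (intro set_eqI iffI)
    fix u assume u: "u \<in> {u\<in>insert y V. {y, u} \<in> insert {x, y} T}"
    have "{y, u} \<notin> T" using assms by auto
    then have "{y, u} = {x, y}" using u by auto
    then show "u \<in> {x}" using assms by (metis doubleton_eq_iff singletonI)
  qed (use assms in auto)
  then show ?thesis unfolding deg_def by simp
qed

lemma deg_leaf_x:
  assumes "finite V" "\<forall>e\<in>T. e \<subseteq> V" "x \<in> V" "y \<notin> V"
  shows "deg (insert y V) (insert {x, y} T) x = deg V T x + 1"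
proof -
  have "{u\<in>insert y V. {x, u} \<in> insert {x, y} T} = insert y {u\<in>V. {x, u} \<in> T}"
  proof (intro set_eqI iffI)
    fix u assume u: "u \<in> {u\<in>insert y V. {x, u} \<in> insert {x, y} T}"
    show "u \<in> insert y {u\<in>V. {x, u} \<in> T}"
    proof (cases "u = y")
      case False
      then have "{x, u} \<noteq> {x, y}" by (metis doubleton_eq_iff)
      then show ?thesis using u False by auto
    qed simp
  qed auto
  moreover have "y \<notin> {u\<in>V. {x, u} \<in> T}" using assms by auto
  moreover have "finite {u\<in>V. {x, u} \<in> T}" using assms by auto
  ultimately show ?thesis unfolding deg_def by simp
qed

lemma deg_leaf_other:
  assumes "\<forall>e\<in>T. e \<subseteq> V" "x \<in> V" "y \<notin> V" "v \<in> V" "v \<noteq> x"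
  shows "deg (insert y V) (insert {x, y} T) v = deg V T v"
proof -
  have "{u\<in>insert y V. {v, u} \<in> insert {x, y} T} = {u\<in>V. {v, u} \<in> T}"
  proof (intro set_eqI iffI)
    fix u assume u: "u \<in> {u\<in>insert y V. {v, u} \<in> insert {x, y} T}"
    have ne: "{v, u} \<noteq> {x, y}" using assms by (metis doubleton_eq_iff)
    then have "{v, u} \<in> T" using u by auto
    moreover then have "u \<in> V" using assms by auto
    ultimately show "u \<in> {u\<in>V. {v, u} \<in> T}" by simp
  qed auto
  then show ?thesis unfolding deg_def by simp
qed


definition Vs :: "nat set \<Rightarrow> nat set \<Rightarrow> (nat + nat) set" where
  "Vs L R = Inl ` L \<union> Inr ` R"

definition Es :: "nat set \<Rightarrow> nat set \<Rightarrow> (nat + nat) set set" where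
  "Es L R = {{Inl i, Inr j} | i j. i \<in> L \<and> j \<in> R}"

lemma Es_mono: "L \<subseteq> L2 \<Longrightarrow> R \<subseteq> R2 \<Longrightarrow> Es L R \<subseteq> Es L2 R2"
  unfolding Es_def by blast

lemma Es_sub: "T \<subseteq> Es L R \<Longrightarrow> \<forall>e\<in>T. e \<subseteq> Vs L R"
  unfolding Es_def Vs_def by auto

lemma sum_upd:
  assumes "finite L" "i \<in> L"
  shows "sum (d(i := c)) L + d i = sum d L + (c::nat)"
proof -
  have "sum (d(i := c)) L = c + sum (d(i := c)) (L - {i})" using assms by (simp add: sum.remove)
  moreover have "sum (d(i := c)) (L - {i}) = sum d (L - {i})" by (rule sum.cong) auto
  moreover have "sum d L = d i + sum d (L - {i})" using assms by (simp add: sum.remove)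
  ultimately show ?thesis by simp
qed

lemma sum_ge2: "finite L \<Longrightarrow> \<forall>i\<in>L. 2 \<le> (d i::nat) \<Longrightarrow> 2 * card L \<le> sum d L"
  using sum_mono[of L "\<lambda>_. 2" d] by simp

lemma sum_le1: "finite L \<Longrightarrow> \<forall>i\<in>L. (d i::nat) \<le> 1 \<Longrightarrow> sum d L \<le> card L"
  using sum_mono[of L d "\<lambda>_. 1"] by simp

lemma construct:
  "n = card L + card R \<Longrightarrow> finite L \<Longrightarrow> finite R \<Longrightarrow> L \<noteq> {} \<Longrightarrow> R \<noteq> {} \<Longrightarrow>
   \<forall>i\<in>L. 0 < d i \<Longrightarrow> \<forall>j\<in>R. 0 < e j \<Longrightarrow>
   sum d L + 1 = card L + card R \<Longrightarrow> sum e R + 1 = card L + card R \<Longrightarrow>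
   \<exists>T. T \<subseteq> Es L R \<and> is_tree (Vs L R) T \<and> (\<forall>i\<in>L. deg (Vs L R) T (Inl i) = d i)
      \<and> (\<forall>j\<in>R. deg (Vs L R) T (Inr j) = e j)"
proof (induction n arbitrary: L R d e rule: less_induct)
  case (less n L R d e)
  have cL: "card L \<ge> 1" and cR: "card R \<ge> 1" using less.prems
    by (simp_all add: Suc_leI card_gt_0_iff)
  show ?case
  proof (cases "card L = 1 \<and> card R = 1")
    case True
    then obtain i j where L: "L = {i}" and R: "R = {j}" by (metis card_1_singletonE)
    have di: "d i = 1" "e j = 1" using less.prems True L R by auto
    have V: "Vs L R = insert (Inr j) {Inl i}" unfolding Vs_def L R by auto
    let ?T = "insert {Inl i, Inr j} {}"
    have tr: "is_tree (Vs L R) ?T" unfolding V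
      by (rule leaf_tree[OF single_tree]) auto
    have d1: "deg (Vs L R) ?T (Inl i) = 1" unfolding V
      using deg_leaf_x[of "{Inl i}" "{}" "Inl i" "Inr j"] by (simp add: deg_def)
    have d2: "deg (Vs L R) ?T (Inr j) = 1" unfolding V
      using deg_leaf_new[of "{}" "{Inl i}" "Inl i" "Inr j"] by simp
    have "?T \<subseteq> Es L R" unfolding Es_def L R by auto
    then show ?thesis using tr d1 d2 di L R by auto
  next
    case notbase: False
    have leaf: "(\<exists>j\<in>R. e j = 1 \<and> 2 \<le> card R) \<or> (\<exists>i\<in>L. d i = 1 \<and> 2 \<le> card L)"
    proof (rule ccontr)
      assume H: "\<not> ?thesis"
      have "(\<forall>j\<in>R. 2 \<le> e j) \<or> (\<forall>i\<in>L. 2 \<le> d i)"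
      proof (rule ccontr)
        assume "\<not> ?thesis"
        then obtain j i where j: "j \<in> R" "e j < 2" and i: "i \<in> L" "d i < 2" by force
        have "e j = 1" "d i = 1" using j i less.prems by force+
        then have "card R < 2" "card L < 2" using H i j by auto
        then show False using notbase cL cR by simp
      qed
      then show False
      proof
        assume "\<forall>j\<in>R. 2 \<le> e j"
        then have A: "2 * card R \<le> sum e R" using sum_ge2 less.prems by blast
        show False
        proof (cases "\<forall>i\<in>L. 2 \<le> d i")
          case True
          then have "2 * card L \<le> sum d L" using sum_ge2 less.prems by blast
          then show False using A less.prems by linarith
        next
          case False
          then obtain i where i0: "i \<in> L" "\<not> 2 \<le> d i" by blast
          then have i: "i \<in> L" "d i = 1" using less.prems by fastforce+
          then have "card L < 2" using H by auto
          then show False using A less.prems cL cR by linarith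
        qed
      next
        assume "\<forall>i\<in>L. 2 \<le> d i"
        then have A: "2 * card L \<le> sum d L" using sum_ge2 less.prems by blast
        show False
        proof (cases "\<forall>j\<in>R. 2 \<le> e j")
          case True
          then have "2 * card R \<le> sum e R" using sum_ge2 less.prems by blast
          then show False using A less.prems by linarith
        next
          case False
          then obtain j where j0: "j \<in> R" "\<not> 2 \<le> e j" by blast
          then have j: "j \<in> R" "e j = 1" using less.prems by fastforce+
          then have "card R < 2" using H by auto
          then show False using A less.prems cL cR by linarith
        qed
      qed
    qed
    then show ?thesis
    proof
      assume "\<exists>j\<in>R. e j = 1 \<and> 2 \<le> card R"
      then obtain j where j: "j \<in> R" "e j = 1" "2 \<le> card R" by blast
      have "\<exists>i\<in>L. 2 \<le> d i"
      proof (rule ccontr)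
        assume "\<not> ?thesis"
        then have "\<forall>i\<in>L. d i \<le> 1" by auto
        then have "sum d L \<le> card L" using sum_le1 less.prems by blast
        then show False using less.prems j by linarith
      qed
      then obtain i where i: "i \<in> L" "2 \<le> d i" by blast
      define R' where "R' = R - {j}"
      define d' where "d' = d(i := d i - 1)"
      have cR': "card R' + 1 = card R" unfolding R'_def using j less.prems
        by (simp add: card_Diff_singleton)
      have sd: "sum d' L + 1 = sum d L" using sum_upd[OF less.prems(2) i(1), of d "d i - 1"] i
        unfolding d'_def by simp
      have se: "sum e R' + 1 = sum e R" unfolding R'_def using j less.prems
        by (metis add.commute sum.remove)
      have "R' \<noteq> {}" using cR' j(3) by (cases "R' = {}") auto
      moreover have "\<forall>i\<in>L. 0 < d' i" using less.prems i unfolding d'_def by auto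
      moreover have "\<forall>j\<in>R'. 0 < e j" using less.prems unfolding R'_def by auto
      ultimately obtain T' where T': "T' \<subseteq> Es L R'" "is_tree (Vs L R') T'"
        "\<forall>i\<in>L. deg (Vs L R') T' (Inl i) = d' i" "\<forall>j\<in>R'. deg (Vs L R') T' (Inr j) = e j"
        using less.IH[of "card L + card R'" L R' d' e] less.prems cR' sd se
        unfolding R'_def by auto
      have V: "Vs L R = insert (Inr j) (Vs L R')" unfolding Vs_def R'_def using j by auto
      have ynot: "Inr j \<notin> Vs L R'" unfolding Vs_def R'_def by auto
      have xin: "Inl i \<in> Vs L R'" unfolding Vs_def using i by auto
      have sub: "\<forall>e\<in>T'. e \<subseteq> Vs L R'" using Es_sub T'(1) .
      have fin: "finite (Vs L R')" unfolding Vs_def R'_def using less.prems by auto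
      let ?T = "insert {Inl i, Inr j} T'"
      have "{Inl i, Inr j} \<in> Es L R" using i j unfolding Es_def by auto
      moreover have "T' \<subseteq> Es L R" using T'(1) Es_mono[of L L R' R] unfolding R'_def by auto
      ultimately have "?T \<subseteq> Es L R" by auto
      moreover have "is_tree (Vs L R) ?T" unfolding V by (rule leaf_tree[OF T'(2) sub xin ynot])
      moreover have "\<forall>i0\<in>L. deg (Vs L R) ?T (Inl i0) = d i0"
      proof
        fix i0 assume i0: "i0 \<in> L"
        show "deg (Vs L R) ?T (Inl i0) = d i0"
        proof (cases "i0 = i")
          case True
          then show ?thesis unfolding V using deg_leaf_x[OF fin sub xin ynot] T'(3) i
            unfolding d'_def by simp
        next
          case False
          have "Inl i0 \<in> Vs L R'" unfolding Vs_def using i0 by auto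
          then show ?thesis unfolding V using deg_leaf_other[OF sub xin ynot] T'(3) i0 False
            unfolding d'_def by simp
        qed
      qed
      moreover have "\<forall>j0\<in>R. deg (Vs L R) ?T (Inr j0) = e j0"
      proof
        fix j0 assume j0: "j0 \<in> R"
        show "deg (Vs L R) ?T (Inr j0) = e j0"
        proof (cases "j0 = j")
          case True
          then show ?thesis unfolding V using deg_leaf_new[OF sub xin ynot] j by simp
        next
          case False
          have j0': "j0 \<in> R'" unfolding R'_def using j0 False by auto
          then have "Inr j0 \<in> Vs L R'" unfolding Vs_def by auto
          then show ?thesis unfolding V using deg_leaf_other[OF sub xin ynot] T'(4) j0'
            by simp
        qed
      qed
      ultimately show ?thesis by blast
    next
      assume "\<exists>i\<in>L. d i = 1 \<and> 2 \<le> card L"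
      then obtain i where i: "i \<in> L" "d i = 1" "2 \<le> card L" by blast
      have "\<exists>j\<in>R. 2 \<le> e j"
      proof (rule ccontr)
        assume "\<not> ?thesis"
        then have "\<forall>j\<in>R. e j \<le> 1" by auto
        then have "sum e R \<le> card R" using sum_le1 less.prems by blast
        then show False using less.prems i by linarith
      qed
      then obtain j where j: "j \<in> R" "2 \<le> e j" by blast
      define L' where "L' = L - {i}"
      define e' where "e' = e(j := e j - 1)"
      have cL': "card L' + 1 = card L" unfolding L'_def using i less.prems
        by (simp add: card_Diff_singleton)
      have se: "sum e' R + 1 = sum e R" using sum_upd[OF less.prems(3) j(1), of e "e j - 1"] j
        unfolding e'_def by simp
      have sd: "sum d L' + 1 = sum d L" unfolding L'_def using i less.prems
        by (metis add.commute sum.remove)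
      have "L' \<noteq> {}" using cL' i(3) by (cases "L' = {}") auto
      moreover have "\<forall>j\<in>R. 0 < e' j" using less.prems j unfolding e'_def by auto
      moreover have "\<forall>i\<in>L'. 0 < d i" using less.prems unfolding L'_def by auto
      ultimately obtain T' where T': "T' \<subseteq> Es L' R" "is_tree (Vs L' R) T'"
        "\<forall>i\<in>L'. deg (Vs L' R) T' (Inl i) = d i" "\<forall>j\<in>R. deg (Vs L' R) T' (Inr j) = e' j"
        using less.IH[of "card L' + card R" L' R d e'] less.prems cL' sd se
        unfolding L'_def by auto
      have V: "Vs L R = insert (Inl i) (Vs L' R)" unfolding Vs_def L'_def using i by auto
      have ynot: "Inl i \<notin> Vs L' R" unfolding Vs_def L'_def by auto
      have xin: "Inr j \<in> Vs L' R" unfolding Vs_def using j by auto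
      have sub: "\<forall>e\<in>T'. e \<subseteq> Vs L' R" using Es_sub T'(1) .
      have fin: "finite (Vs L' R)" unfolding Vs_def L'_def using less.prems by auto
      let ?T = "insert {Inr j, Inl i} T'"
      have "{Inr j, Inl i} \<in> Es L R" using i j unfolding Es_def by (auto simp: insert_commute)
      moreover have "T' \<subseteq> Es L R" using T'(1) Es_mono[of L' L R R] unfolding L'_def by auto
      ultimately have "?T \<subseteq> Es L R" by auto
      moreover have "is_tree (Vs L R) ?T" unfolding V by (rule leaf_tree[OF T'(2) sub xin ynot])
      moreover have "\<forall>j0\<in>R. deg (Vs L R) ?T (Inr j0) = e j0"
      proof
        fix j0 assume j0: "j0 \<in> R"
        show "deg (Vs L R) ?T (Inr j0) = e j0"
        proof (cases "j0 = j")
          case True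
          then show ?thesis unfolding V using deg_leaf_x[OF fin sub xin ynot] T'(4) j
            unfolding e'_def by simp
        next
          case False
          have "Inr j0 \<in> Vs L' R" unfolding Vs_def using j0 by auto
          then show ?thesis unfolding V using deg_leaf_other[OF sub xin ynot] T'(4) j0 False
            unfolding e'_def by simp
        qed
      qed
      moreover have "\<forall>i0\<in>L. deg (Vs L R) ?T (Inl i0) = d i0"
      proof
        fix i0 assume i0: "i0 \<in> L"
        show "deg (Vs L R) ?T (Inl i0) = d i0"
        proof (cases "i0 = i")
          case True
          then show ?thesis unfolding V using deg_leaf_new[OF sub xin ynot] i by simp
        next
          case False
          have i0': "i0 \<in> L'" unfolding L'_def using i0 False by auto
          then have "Inl i0 \<in> Vs L' R" unfolding Vs_def by auto
          then show ?thesis unfolding V using deg_leaf_other[OF sub xin ynot] T'(3) i0'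
            by simp
        qed
      qed
      ultimately show ?thesis by blast
    qed
  qed
qed


lemma kab_eqs: "kab_verts a b = Vs {..<a} {..<b}" "kab_edges a b = Es {..<a} {..<b}"
  unfolding kab_verts_def Vs_def kab_edges_def Es_def by auto

lemma kab_edge_props:
  assumes "{u, v} \<in> kab_edges a b"
  shows "isl u \<noteq> isl v" "u \<in> kab_verts a b" "v \<in> kab_verts a b"
  using assms unfolding kab_edges_def kab_verts_def
  by (auto simp: doubleton_eq_iff)

lemma mset_deg_conv:
  assumes "inj g" "finite X"
  shows "image_mset h (mset_set (g ` X)) = image_mset (\<lambda>i. h (g i)) (mset_set X)"
proof -
  have "mset_set (g ` X) = image_mset g (mset_set X)"
    using assms by (simp add: image_mset_mset_set inj_on_subset)
  then show ?thesis by (simp add: multiset.map_comp comp_def)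
qed

lemma iso_deg:
  assumes bij: "bij_betw f V V"
    and adj: "\<forall>u\<in>V. \<forall>v\<in>V. {u, v} \<in> T1 \<longleftrightarrow> {f u, f v} \<in> T2"
    and v: "v \<in> V" and fin: "finite V"
  shows "deg V T2 (f v) = deg V T1 v"
proof -
  have fV: "f ` V = V" using bij by (simp add: bij_betw_def)
  have inj: "inj_on f V" using bij by (simp add: bij_betw_def)
  have "{u\<in>V. {f v, u} \<in> T2} = f ` {u\<in>V. {v, u} \<in> T1}"
  proof (intro set_eqI iffI)
    fix u assume "u \<in> {u\<in>V. {f v, u} \<in> T2}"
    then have u: "u \<in> V" "{f v, u} \<in> T2" by auto
    then obtain u' where u': "u' \<in> V" "u = f u'" using fV by blast
    then show "u \<in> f ` {u\<in>V. {v, u} \<in> T1}" using adj v u by auto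
  next
    fix u assume "u \<in> f ` {u\<in>V. {v, u} \<in> T1}"
    then show "u \<in> {u\<in>V. {f v, u} \<in> T2}" using adj v fV by auto
  qed
  moreover have "inj_on f {u\<in>V. {v, u} \<in> T1}" using inj by (rule inj_on_subset) auto
  ultimately show ?thesis unfolding deg_def by (simp add: card_image)
qed

lemma iso_mset:
  assumes bij: "bij_betw f V V"
    and adj: "\<forall>u\<in>V. \<forall>v\<in>V. {u, v} \<in> T1 \<longleftrightarrow> {f u, f v} \<in> T2"
    and fin: "finite V" and S: "S \<subseteq> V" "f ` S = S"
  shows "image_mset (deg V T2) (mset_set S) = image_mset (deg V T1) (mset_set S)"
proof -
  have finS: "finite S" using fin S finite_subset by blast
  have injS: "inj_on f S" using bij S by (metis bij_betw_def inj_on_subset)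
  have "image_mset (deg V T2) (mset_set S) = image_mset (deg V T2) (mset_set (f ` S))"
    using S by simp
  also have "\<dots> = image_mset (deg V T2) (image_mset f (mset_set S))"
    using injS by (simp add: image_mset_mset_set)
  also have "\<dots> = image_mset (\<lambda>x. deg V T2 (f x)) (mset_set S)"
    by (simp add: multiset.map_comp comp_def)
  also have "\<dots> = image_mset (deg V T1) (mset_set S)"
  proof (rule image_mset_cong)
    fix x assume "x \<in># mset_set S"
    then have "x \<in> V" using finS S by auto
    then show "deg V T2 (f x) = deg V T1 x" using iso_deg[OF bij adj _ fin] by simp
  qed
  finally show ?thesis .
qed

lemma iso_sides:
  assumes ab: "a < b"
    and st1: "spanning_tree_kab a b T1" and st2: "spanning_tree_kab a b T2"
    and bij: "bij_betw f (kab_verts a b) (kab_verts a b)"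
    and adj: "\<forall>u\<in>kab_verts a b. \<forall>v\<in>kab_verts a b. {u, v} \<in> T1 \<longleftrightarrow> {f u, f v} \<in> T2"
  shows "f ` (Inl ` {..<a}) = Inl ` {..<a}" "f ` (Inr ` {..<b}) = Inr ` {..<b}"
proof -
  let ?V = "kab_verts a b"
  define P where "P v \<longleftrightarrow> (isl (f v) = isl v)" for v
  have w: "Inr 0 \<in> ?V" using ab unfolding kab_verts_def by auto
  have conn: "graph_connected ?V T1" using st1 unfolding spanning_tree_kab_def is_tree_def by simp
  have T1s: "T1 \<subseteq> kab_edges a b" and T2s: "T2 \<subseteq> kab_edges a b"
    using st1 st2 unfolding spanning_tree_kab_def by auto
  have allP: "P v = P (Inr 0)" if v: "v \<in> ?V" for v
  proof -
    have "(Inr 0, v) \<in> {(x, y). {x, y} \<in> T1}\<^sup>*" using conn w v unfolding graph_connected_def by blast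
    then show ?thesis
    proof (induction rule: rtrancl_induct)
      case base then show ?case by simp
    next
      case (step y z)
      then have yz: "{y, z} \<in> T1" by simp
      then have e1: "{y, z} \<in> kab_edges a b" using T1s by auto
      then have yV: "y \<in> ?V" and zV: "z \<in> ?V" and d1: "isl y \<noteq> isl z"
        using kab_edge_props by blast+
      have "{f y, f z} \<in> T2" using adj yV zV yz by blast
      then have "isl (f y) \<noteq> isl (f z)" using T2s kab_edge_props by blast
      then have "P y = P z" using d1 unfolding P_def by auto
      then show ?case using step.IH by simp
    qed
  qed
  have fV: "f ` ?V = ?V" and inj: "inj_on f ?V" using bij by (auto simp: bij_betw_def)
  have Pw: "P (Inr 0)"
  proof (rule ccontr)
    assume nP: "\<not> P (Inr 0)"
    have sub: "Inr ` {..<b} \<subseteq> ?V" unfolding kab_verts_def by auto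
    have "f ` (Inr ` {..<b}) \<subseteq> Inl ` {..<a}"
    proof
      fix u assume "u \<in> f ` (Inr ` {..<b})"
      then obtain j where j: "j < b" "u = f (Inr j)" by auto
      have jV: "Inr j \<in> ?V" using j sub by auto
      then have "\<not> P (Inr j)" using allP nP by blast
      then have "isl u" using j unfolding P_def by simp
      moreover have "u \<in> ?V" using j jV fV by auto
      ultimately show "u \<in> Inl ` {..<a}" unfolding kab_verts_def by auto
    qed
    moreover have "inj_on f (Inr ` {..<b})" using inj sub by (rule inj_on_subset)
    ultimately have "card (Inr ` {..<b} :: (nat + nat) set) \<le> card (Inl ` {..<a} :: (nat + nat) set)"
      by (intro card_inj_on_le[of f]) auto
    then have "b \<le> a" by (simp add: card_image)
    then show False using ab by simp
  qed
  have allP2: "\<And>v. v \<in> ?V \<Longrightarrow> isl (f v) = isl v" using allP Pw unfolding P_def by blast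
  have subL: "Inl ` {..<a} \<subseteq> ?V" and subR: "Inr ` {..<b} \<subseteq> ?V" unfolding kab_verts_def by auto
  have fL: "f ` (Inl ` {..<a}) \<subseteq> Inl ` {..<a}"
  proof
    fix u assume "u \<in> f ` (Inl ` {..<a})"
    then obtain i where i: "i < a" "u = f (Inl i)" by auto
    then have "Inl i \<in> ?V" using subL by auto
    then have "isl u" "u \<in> ?V" using allP2 i fV by auto
    then show "u \<in> Inl ` {..<a}" unfolding kab_verts_def by auto
  qed
  show "f ` (Inl ` {..<a}) = Inl ` {..<a}"
    by (rule endo_inj_surj[OF _ fL inj_on_subset[OF inj subL]]) simp
  have fR: "f ` (Inr ` {..<b}) \<subseteq> Inr ` {..<b}"
  proof
    fix u assume "u \<in> f ` (Inr ` {..<b})"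
    then obtain j where j: "j < b" "u = f (Inr j)" by auto
    then have "Inr j \<in> ?V" using subR by auto
    then have "\<not> isl u" "u \<in> ?V" using allP2 j fV by auto
    then show "u \<in> Inr ` {..<b}" unfolding kab_verts_def by auto
  qed
  show "f ` (Inr ` {..<b}) = Inr ` {..<b}"
    by (rule endo_inj_surj[OF _ fR inj_on_subset[OF inj subR]]) simp
qed


definition invk :: "nat \<Rightarrow> nat \<Rightarrow> (nat + nat) set set \<Rightarrow> nat multiset \<times> nat multiset" where
  "invk a b T = (image_mset (\<lambda>i. deg (kab_verts a b) T (Inl i)) (mset_set {..<a}),
                 image_mset (\<lambda>j. deg (kab_verts a b) T (Inr j)) (mset_set {..<b}))"

lemma invk_iso:
  assumes ab: "a < b" and st1: "spanning_tree_kab a b T1" and st2: "spanning_tree_kab a b T2"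
    and iso: "graph_iso (kab_verts a b) T1 T2"
  shows "invk a b T1 = invk a b T2"
proof -
  let ?V = "kab_verts a b"
  obtain f where bij: "bij_betw f ?V ?V"
    and adj: "\<forall>u\<in>?V. \<forall>v\<in>?V. {u, v} \<in> T1 \<longleftrightarrow> {f u, f v} \<in> T2"
    using iso unfolding graph_iso_def by blast
  have fin: "finite ?V" unfolding kab_verts_def by simp
  have sL: "f ` (Inl ` {..<a}) = Inl ` {..<a}" and sR: "f ` (Inr ` {..<b}) = Inr ` {..<b}"
    using iso_sides[OF ab st1 st2 bij adj] by auto
  have subL: "Inl ` {..<a} \<subseteq> ?V" and subR: "Inr ` {..<b} \<subseteq> ?V" unfolding kab_verts_def by auto
  have mL: "image_mset (deg ?V T2) (mset_set (Inl ` {..<a})) = image_mset (deg ?V T1) (mset_set (Inl ` {..<a}))"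
    by (rule iso_mset[OF bij adj fin subL sL])
  have mR: "image_mset (deg ?V T2) (mset_set (Inr ` {..<b})) = image_mset (deg ?V T1) (mset_set (Inr ` {..<b}))"
    by (rule iso_mset[OF bij adj fin subR sR])
  show ?thesis unfolding invk_def
    using mL mR unfolding mset_deg_conv[OF inj_Inl finite_lessThan] mset_deg_conv[OF inj_Inr finite_lessThan]
    by simp
qed

lemma invk_exists:
  assumes a: "2 \<le> a" and ab: "a < b"
    and p: "size p = a" "sum_mset p = a + b - 1" "\<forall>x\<in>#p. 0 < x"
    and q: "size q = b" "sum_mset q = a + b - 1" "\<forall>x\<in>#q. 0 < x"
  shows "\<exists>T. spanning_tree_kab a b T \<and> invk a b T = (p, q)"
proof -
  obtain xs where xs: "mset xs = p" using ex_mset by blast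
  obtain ys where ys: "mset ys = q" using ex_mset by blast
  have lx: "length xs = a" using xs p by auto
  have ly: "length ys = b" using ys q by auto
  have sx: "sum ((!) xs) {..<a} = a + b - 1"
    using p xs lx by (metis lessThan_atLeast0 sum_list_sum_nth sum_mset_sum_list)
  have sy: "sum ((!) ys) {..<b} = a + b - 1"
    using q ys ly by (metis lessThan_atLeast0 sum_list_sum_nth sum_mset_sum_list)
  have px: "\<forall>i\<in>{..<a}. 0 < xs ! i"
  proof
    fix i assume "i \<in> {..<a}"
    then have "xs ! i \<in> set xs" using lx by simp
    then have "xs ! i \<in># p" using xs by (metis set_mset_mset)
    then show "0 < xs ! i" using p(3) by blast
  qed
  have py: "\<forall>j\<in>{..<b}. 0 < ys ! j"
  proof
    fix j assume "j \<in> {..<b}"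
    then have "ys ! j \<in> set ys" using ly by simp
    then have "ys ! j \<in># q" using ys by (metis set_mset_mset)
    then show "0 < ys ! j" using q(3) by blast
  qed
  obtain T where T: "T \<subseteq> Es {..<a} {..<b}" "is_tree (Vs {..<a} {..<b}) T"
    "\<forall>i\<in>{..<a}. deg (Vs {..<a} {..<b}) T (Inl i) = xs ! i"
    "\<forall>j\<in>{..<b}. deg (Vs {..<a} {..<b}) T (Inr j) = ys ! j"
  proof -
    have ne: "{..<a} \<noteq> {}" "{..<b} \<noteq> {}" using a ab by (auto simp: lessThan_empty_iff)
    have s1: "sum ((!) xs) {..<a} + 1 = card {..<a} + card {..<b}" using sx a by simp
    have s2: "sum ((!) ys) {..<b} + 1 = card {..<a} + card {..<b}" using sy a by simp
    show ?thesis using construct[OF refl finite_lessThan finite_lessThan ne px py s1 s2] that by blast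
  qed
  have st: "spanning_tree_kab a b T" unfolding spanning_tree_kab_def kab_eqs using T by simp
  have "image_mset (\<lambda>i. deg (kab_verts a b) T (Inl i)) (mset_set {..<a}) = image_mset ((!) xs) (mset_set {..<a})"
    by (rule image_mset_cong) (use T(3) in \<open>auto simp: kab_eqs\<close>)
  also have "\<dots> = mset xs" using lx mset_set_upto_eq_mset_upto[of a] by (metis map_nth mset_map)
  finally have i1: "image_mset (\<lambda>i. deg (kab_verts a b) T (Inl i)) (mset_set {..<a}) = p" using xs by simp
  have "image_mset (\<lambda>j. deg (kab_verts a b) T (Inr j)) (mset_set {..<b}) = image_mset ((!) ys) (mset_set {..<b})"
    by (rule image_mset_cong) (use T(4) in \<open>auto simp: kab_eqs\<close>)
  also have "\<dots> = mset ys" using ly mset_set_upto_eq_mset_upto[of b] by (metis map_nth mset_map)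
  finally have i2: "image_mset (\<lambda>j. deg (kab_verts a b) T (Inr j)) (mset_set {..<b}) = q" using ys by simp
  show ?thesis using st i1 i2 unfolding invk_def by blast
qed

theorem theorem2p3:
  fixes a b :: nat
  assumes "2 \<le> a" and "a < b"
  shows "P_parts a (a + b - 1) * P_parts b (a + b - 1) \<le> I_kab a b"
proof -
  let ?n = "a + b - 1"
  define A where "A = {p :: nat multiset. size p = a \<and> sum_mset p = ?n \<and> (\<forall>x\<in>#p. 0 < x)}"
  define B where "B = {p :: nat multiset. size p = b \<and> sum_mset p = ?n \<and> (\<forall>x\<in>#p. 0 < x)}"
  let ?V = "kab_verts a b"
  define ST where "ST = {T. spanning_tree_kab a b T}"
  define cls where "cls T = {T'. spanning_tree_kab a b T' \<and> graph_iso ?V T T'}" for T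
  define g where "g pq = cls (SOME T. T \<in> ST \<and> invk a b T = pq)" for pq
  have ex: "\<exists>T. T \<in> ST \<and> invk a b T = pq" if "pq \<in> A \<times> B" for pq
    using that invk_exists[OF assms] unfolding A_def B_def ST_def by (cases pq) auto
  have some: "(SOME T. T \<in> ST \<and> invk a b T = pq) \<in> ST \<and> invk a b (SOME T. T \<in> ST \<and> invk a b T = pq) = pq"
    if "pq \<in> A \<times> B" for pq
    using someI_ex[OF ex[OF that]] .
  have refl: "T \<in> cls T" if "T \<in> ST" for T
    using that unfolding cls_def ST_def graph_iso_def by (auto intro!: exI[of _ id])
  have inj: "inj_on g (A \<times> B)"
  proof (rule inj_onI)
    fix x y assume x: "x \<in> A \<times> B" and y: "y \<in> A \<times> B" and gxy: "g x = g y"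
    define Tx where "Tx = (SOME T. T \<in> ST \<and> invk a b T = x)"
    define Ty where "Ty = (SOME T. T \<in> ST \<and> invk a b T = y)"
    have Tx: "Tx \<in> ST" "invk a b Tx = x" using some[OF x] unfolding Tx_def by auto
    have Ty: "Ty \<in> ST" "invk a b Ty = y" using some[OF y] unfolding Ty_def by auto
    have "Ty \<in> cls Tx" using refl[OF Ty(1)] gxy unfolding g_def Tx_def Ty_def by simp
    then have "graph_iso ?V Tx Ty" unfolding cls_def by simp
    then have "invk a b Tx = invk a b Ty"
      using invk_iso[OF assms(2)] Tx(1) Ty(1) unfolding ST_def by blast
    then show "x = y" using Tx Ty by simp
  qed
  have fE: "finite (kab_edges a b)"
  proof -
    have "kab_edges a b = (\<lambda>(i, j). {Inl i, Inr j}) ` ({..<a} \<times> {..<b})"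
      unfolding kab_edges_def by auto
    then show ?thesis by simp
  qed
  have finST: "finite ST"
  proof (rule finite_subset)
    show "ST \<subseteq> Pow (kab_edges a b)" unfolding ST_def spanning_tree_kab_def by auto
    show "finite (Pow (kab_edges a b))" using fE by simp
  qed
  have img: "g ` (A \<times> B) \<subseteq> cls ` ST"
  proof (rule image_subsetI)
    fix pq assume "pq \<in> A \<times> B"
    then have "(SOME T. T \<in> ST \<and> invk a b T = pq) \<in> ST" using some by blast
    then show "g pq \<in> cls ` ST" unfolding g_def by (rule imageI)
  qed
  have "card (A \<times> B) \<le> card (cls ` ST)"
    by (rule card_inj_on_le[OF inj img]) (use finST in simp)
  moreover have "card (A \<times> B) = P_parts a ?n * P_parts b ?n"
    unfolding A_def B_def P_parts_def by (simp add: card_cartesian_product)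
  moreover have "I_kab a b = card (cls ` ST)"
    unfolding I_kab_def cls_def ST_def by simp
  ultimately show ?thesis by simp
qed

end
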